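(* In the $n$-node line network described in the context, with rates $\mu_0,\ldots,\mu_{n-1}>0$, there exists $s_0>0$ such that for all $s<s_0$ and each $k\in\{1,\ldots,n\}$, $$\lim_{t\to\infty}\mathbb{E}\left[e^{sx_k(t)}\right]=\prod_{i=0}^{k-1}\frac{\mu_i}{\mu_i-s}.$$
   Context: The line network is the following age process. There are monitors at nodes $1,\ldots,n$ with ages $\mathbf{x}(t)=[x_1(t)\ \cdots\ x_n(t)]$; each age grows at unit rate between events. There are $n$ independent Poisson event processes with rates $\mu_0,\ldots,\mu_{n-1}$. At an event of process $0$, $x_1$ is reset to $0$ and all other ages are unchanged. At an event of process $l\in\{1,\ldots,n-1\}$, $x_{l+1}$ is reset to $x_l$ and all other ages are unchanged. (Equivalently, this is the age process of a line of preemptive memoryless $\cdot$/M/1/1 servers with service rates $\mu_1,\ldots,\mu_{n-1}$ fed by a rate-$\mu_0$ Poisson source of fresh updates.) *)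

theory Defs
  imports "HOL-Probability.Probability"
begin

text \<open>Sample point: omega l is the stream of i.i.d. Exp(mu l)
  inter-event times of Poisson process l (l < n). Monitor 0 is the source
  (age constantly 0); monitors 1..n are the ones of the paper.\<close>

definition line_M :: "nat \<Rightarrow> (nat \<Rightarrow> real) \<Rightarrow> (nat \<Rightarrow> real stream) measure" where
  "line_M n \<mu> = (\<Pi>\<^sub>M l\<in>{..<n}. stream_space (density lborel (exponential_density (\<mu> l))))"

definition line_evt :: "(nat \<Rightarrow> real stream) \<Rightarrow> nat \<Rightarrow> nat \<Rightarrow> real" where
  "line_evt \<omega> l j = (\<Sum>i\<le>j. \<omega> l !! i)"

text \<open>Age of monitor k at time t, given initial ages x0. With incl = True this
  is x_k(t) (events at times \<le> t counted); with incl = False it is the left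
  limit x_k(t-) (events at times < t). An event of process k at time tau sets
  x_(k+1) to x_k(tau-).\<close>
fun line_age :: "(nat \<Rightarrow> real stream) \<Rightarrow> (nat \<Rightarrow> real) \<Rightarrow> bool \<Rightarrow> nat \<Rightarrow> real \<Rightarrow> real" where
  "line_age \<omega> x0 incl 0 t = 0"
| "line_age \<omega> x0 incl (Suc k) t =
     (let N = card {j. line_evt \<omega> k j < t \<or> (incl \<and> line_evt \<omega> k j = t)} in
      if N = 0 then x0 (Suc k) + t
      else (let \<tau> = line_evt \<omega> k (N - 1) in line_age \<omega> x0 False k \<tau> + (t - \<tau>)))"

end

theory Submission
  imports Defs
begin



definition evt :: "real stream \<Rightarrow> nat \<Rightarrow> real" where
  "evt \<omega> j = (\<Sum>i\<le>j. \<omega> !! i)"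

definition ltb :: "bool \<Rightarrow> real \<Rightarrow> real \<Rightarrow> bool" where
  "ltb incl a b \<longleftrightarrow> a < b \<or> incl \<and> a = b"

lemma evt_Stream0[simp]: "evt (x ## \<omega>) 0 = x"
  by (simp add: evt_def)

lemma evt_StreamSuc[simp]: "evt (x ## \<omega>) (Suc j) = x + evt \<omega> j"
  unfolding evt_def by (subst sum.atMost_Suc_shift) simp

lemma evt_Suc: "evt \<omega> (Suc j) = evt \<omega> j + \<omega> !! Suc j"
  by (simp add: evt_def)

lemma ltb_shift: "ltb incl (x + a) t \<longleftrightarrow> ltb incl a (t - x)"
  by (auto simp: ltb_def)

lemma ltb_le: "ltb incl a t \<Longrightarrow> a \<le> t"
  by (auto simp: ltb_def)

lemma meas_snth_dens[measurable]:
  "(\<lambda>\<omega>. \<omega> !! i) \<in> borel_measurable (stream_space (density lborel f))"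
proof -
  have "(\<lambda>\<omega>. \<omega> !! i) \<in> measurable (stream_space (density lborel f)) (density lborel f)"
    by (rule measurable_snth)
  then show ?thesis
    by (simp add: measurable_cong_sets[OF refl sets_density[THEN trans, OF sets_lborel]])
qed

lemma meas_evt[measurable]:
  "(\<lambda>\<omega>. evt \<omega> j) \<in> borel_measurable (stream_space (density lborel f))"
  unfolding evt_def by measurable

lemma meas_ltb[measurable]:
  assumes [measurable]: "f \<in> borel_measurable M" "g \<in> borel_measurable M"
  shows "Measurable.pred M (\<lambda>x. ltb incl (f x) (g x))"
  unfolding ltb_def by measurable

locale expo =
  fixes \<mu> :: real
  assumes mu_pos: "0 < \<mu>"
begin

abbreviation "E \<equiv> density lborel (exponential_density \<mu>)"
abbreviation "P \<equiv> stream_space E"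

sublocale prob_space E
  using prob_space_exponential_density[OF mu_pos] .

lemma PP: "prob_space P"
  by (rule prob_space_stream_space)

lemma sets_E[simp]: "sets E = sets borel" by simp
lemma space_E[simp]: "space E = UNIV" by simp

lemma G_lemma:
  assumes r: "0 \<le> r"
  shows "(\<integral>\<^sup>+x. indicator {x. \<not> ltb incl x r} x \<partial>E) = ennreal (exp (- \<mu> * r))"
proof -
  have ae: "AE x in E. x \<noteq> r"
    apply (subst AE_density)
     apply simp
    using AE_lborel_singleton[of r] by eventually_elim simp
  have "(\<integral>\<^sup>+x. indicator {x. \<not> ltb incl x r} x \<partial>E) = (\<integral>\<^sup>+x. indicator {r<..} x \<partial>E)"
    apply (rule nn_integral_cong_AE)
    using ae apply eventually_elim
    by (simp add: ltb_def split: split_indicator)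
  also have "\<dots> = emeasure E {r<..}" by simp
  also have "{r<..} = space E - {..r}" by auto
  also have "emeasure E (space E - {..r}) = emeasure E (space E) - emeasure E {..r}"
    by (rule emeasure_compl) (simp_all add: emeasure_finite)
  also have "emeasure E {..r} = ennreal (1 - exp (- \<mu> * r))"
    using emeasure_erlang_density[OF mu_pos, of 0 r] r by (simp add: erlang_CDF_def)
  also have "emeasure E (space E) = ennreal 1" using emeasure_space_1 by simp
  also have "ennreal 1 - ennreal (1 - exp (- \<mu> * r)) = ennreal (exp (- \<mu> * r))"
    using mu_pos r by (subst ennreal_minus) (auto intro: mult_nonneg_nonneg)
  finally show ?thesis .
qed

lemma evt_0[simp]: "evt \<omega> 0 = \<omega> !! 0"
  by (simp add: evt_def)

lemma nn_integral_snth0: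
  assumes [measurable]: "g \<in> borel_measurable borel"
  shows "(\<integral>\<^sup>+\<omega>. g (\<omega> !! 0) \<partial>P) = (\<integral>\<^sup>+y. g y \<partial>E)"
proof -
  interpret S: prob_space P by (rule PP)
  have "(\<integral>\<^sup>+\<omega>. g (\<omega> !! 0) \<partial>P) = (\<integral>\<^sup>+y. (\<integral>\<^sup>+\<omega>. g y \<partial>P) \<partial>E)"
    by (subst nn_integral_stream_space) simp_all
  also have "\<dots> = (\<integral>\<^sup>+y. g y \<partial>E)"
    by (simp add: S.emeasure_space_1)
  finally show ?thesis .
qed

definition Tj :: "bool \<Rightarrow> nat \<Rightarrow> (real \<Rightarrow> ennreal) \<Rightarrow> real \<Rightarrow> ennreal" where
  "Tj incl j h t = (\<integral>\<^sup>+\<omega>. (if ltb incl (evt \<omega> j) t \<and> \<not> ltb incl (evt \<omega> (Suc j)) t then h (evt \<omega> j) else 0) \<partial>P)"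

lemma AE_lborel_ltb:
  "AE x in lborel. (ltb incl x t \<longleftrightarrow> x \<le> t)"
  using AE_lborel_singleton[of t] by eventually_elim (auto simp: ltb_def)

lemma T_formula:
  assumes [measurable]: "h \<in> borel_measurable borel"
  shows "Tj incl j h t = (\<integral>\<^sup>+\<tau>. ennreal (erlang_density j \<mu> \<tau>) * h \<tau> * ennreal (exp (- \<mu> * (t - \<tau>))) * indicator {..t} \<tau> \<partial>lborel)"
  using assms
proof (induction j arbitrary: h t)
  case 0
  note [measurable] = 0
  have "Tj incl 0 h t = (\<integral>\<^sup>+x. (\<integral>\<^sup>+\<omega>. (if ltb incl x t \<and> \<not> ltb incl (x + \<omega> !! 0) t then h x else 0) \<partial>P) \<partial>E)"
    unfolding Tj_def by (subst nn_integral_stream_space) (simp_all cong: if_cong)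
  also have "\<dots> = (\<integral>\<^sup>+x. (if ltb incl x t then h x * ennreal (exp (- \<mu> * (t - x))) else 0) \<partial>E)"
  proof (rule nn_integral_cong)
    fix x
    show "(\<integral>\<^sup>+\<omega>. (if ltb incl x t \<and> \<not> ltb incl (x + \<omega> !! 0) t then h x else 0) \<partial>P) =
      (if ltb incl x t then h x * ennreal (exp (- \<mu> * (t - x))) else 0)"
    proof (cases "ltb incl x t")
      case True
      have "(\<integral>\<^sup>+\<omega>. (if ltb incl x t \<and> \<not> ltb incl (x + \<omega> !! 0) t then h x else 0) \<partial>P)
          = (\<integral>\<^sup>+\<omega>. h x * indicator {y. \<not> ltb incl y (t - x)} (\<omega> !! 0) \<partial>P)"
        using True by (intro nn_integral_cong) (simp add: ltb_shift split: split_indicator)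
      also have "\<dots> = h x * (\<integral>\<^sup>+\<omega>. indicator {y. \<not> ltb incl y (t - x)} (\<omega> !! 0) \<partial>P)"
        by (rule nn_integral_cmult) simp
      also have "(\<integral>\<^sup>+\<omega>. indicator {y. \<not> ltb incl y (t - x)} (\<omega> !! 0) \<partial>P) = (\<integral>\<^sup>+y. indicator {y. \<not> ltb incl y (t - x)} y \<partial>E)"
        by (rule nn_integral_snth0) simp
      also have "(\<integral>\<^sup>+y. indicator {y. \<not> ltb incl y (t - x)} y \<partial>E) = ennreal (exp (- \<mu> * (t - x)))"
        by (rule G_lemma) (use ltb_le[OF True] in simp)
      finally show ?thesis using True by simp
    qed simp
  qed
  also have "\<dots> = (\<integral>\<^sup>+x. ennreal (exponential_density \<mu> x) * (if ltb incl x t then h x * ennreal (exp (- \<mu> * (t - x))) else 0) \<partial>lborel)"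
    by (rule nn_integral_density) simp_all
  also have "\<dots> = (\<integral>\<^sup>+\<tau>. ennreal (erlang_density 0 \<mu> \<tau>) * h \<tau> * ennreal (exp (- \<mu> * (t - \<tau>))) * indicator {..t} \<tau> \<partial>lborel)"
    apply (rule nn_integral_cong_AE)
    using AE_lborel_ltb[of incl t] apply eventually_elim
    by (simp add: mult.assoc split: split_indicator)
  finally show ?case .
next
  case (Suc j)
  note [measurable] = Suc.prems
  have "Tj incl (Suc j) h t = (\<integral>\<^sup>+x. (\<integral>\<^sup>+\<omega>. (if ltb incl (x + evt \<omega> j) t \<and> \<not> ltb incl (x + evt \<omega> (Suc j)) t then h (x + evt \<omega> j) else 0) \<partial>P) \<partial>E)"
    unfolding Tj_def by (subst nn_integral_stream_space) (simp_all cong: if_cong)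
  also have "\<dots> = (\<integral>\<^sup>+x. Tj incl j (\<lambda>\<tau>. h (x + \<tau>)) (t - x) \<partial>E)"
    unfolding Tj_def by (simp add: ltb_shift)
  also have "\<dots> = (\<integral>\<^sup>+x. (\<integral>\<^sup>+\<tau>. ennreal (erlang_density j \<mu> \<tau>) * h (x + \<tau>) * ennreal (exp (- \<mu> * (t - x - \<tau>))) * indicator {..t - x} \<tau> \<partial>lborel) \<partial>E)"
    by (intro nn_integral_cong Suc.IH) simp
  also have "\<dots> = (\<integral>\<^sup>+x. (\<integral>\<^sup>+\<sigma>. ennreal (erlang_density j \<mu> (\<sigma> - x)) * h \<sigma> * ennreal (exp (- \<mu> * (t - \<sigma>))) * indicator {..t} \<sigma> \<partial>lborel) \<partial>E)"
  proof (rule nn_integral_cong)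
    fix x :: real
    have "(\<integral>\<^sup>+\<tau>. ennreal (erlang_density j \<mu> \<tau>) * h (x + \<tau>) * ennreal (exp (- \<mu> * (t - x - \<tau>))) * indicator {..t - x} \<tau> \<partial>lborel)
      = ennreal \<bar>1::real\<bar> * (\<integral>\<^sup>+\<sigma>. ennreal (erlang_density j \<mu> (- x + 1 * \<sigma>)) * h (x + (- x + 1 * \<sigma>)) * ennreal (exp (- \<mu> * (t - x - (- x + 1 * \<sigma>)))) * indicator {..t - x} (- x + 1 * \<sigma>) \<partial>lborel)"
      by (rule nn_integral_real_affine) simp_all
    also have "\<dots> = (\<integral>\<^sup>+\<sigma>. ennreal (erlang_density j \<mu> (\<sigma> - x)) * h \<sigma> * ennreal (exp (- \<mu> * (t - \<sigma>))) * indicator {..t} \<sigma> \<partial>lborel)"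
      by (simp only: abs_one ennreal_1 mult_1 mult_1_left) (intro nn_integral_cong; simp split: split_indicator)
    finally show "(\<integral>\<^sup>+\<tau>. ennreal (erlang_density j \<mu> \<tau>) * h (x + \<tau>) * ennreal (exp (- \<mu> * (t - x - \<tau>))) * indicator {..t - x} \<tau> \<partial>lborel)
      = (\<integral>\<^sup>+\<sigma>. ennreal (erlang_density j \<mu> (\<sigma> - x)) * h \<sigma> * ennreal (exp (- \<mu> * (t - \<sigma>))) * indicator {..t} \<sigma> \<partial>lborel)" .
  qed
  also have "\<dots> = (\<integral>\<^sup>+x. ennreal (exponential_density \<mu> x) * (\<integral>\<^sup>+\<sigma>. ennreal (erlang_density j \<mu> (\<sigma> - x)) * h \<sigma> * ennreal (exp (- \<mu> * (t - \<sigma>))) * indicator {..t} \<sigma> \<partial>lborel) \<partial>lborel)"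
    by (rule nn_integral_density) measurable
  also have "\<dots> = (\<integral>\<^sup>+x. (\<integral>\<^sup>+\<sigma>. (ennreal (erlang_density j \<mu> (\<sigma> - x)) * ennreal (exponential_density \<mu> x)) * (h \<sigma> * ennreal (exp (- \<mu> * (t - \<sigma>))) * indicator {..t} \<sigma>) \<partial>lborel) \<partial>lborel)"
    apply (intro nn_integral_cong)
    apply (subst nn_integral_cmult[symmetric])
     apply simp
    apply (intro nn_integral_cong)
    by (simp add: ac_simps)
  also have "\<dots> = (\<integral>\<^sup>+\<sigma>. (\<integral>\<^sup>+x. (ennreal (erlang_density j \<mu> (\<sigma> - x)) * ennreal (exponential_density \<mu> x)) * (h \<sigma> * ennreal (exp (- \<mu> * (t - \<sigma>))) * indicator {..t} \<sigma>) \<partial>lborel) \<partial>lborel)"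
    by (rule lborel_pair.Fubini'[symmetric]) simp
  also have "\<dots> = (\<integral>\<^sup>+\<sigma>. (\<integral>\<^sup>+x. ennreal (erlang_density j \<mu> (\<sigma> - x)) * ennreal (exponential_density \<mu> x) \<partial>lborel) * (h \<sigma> * ennreal (exp (- \<mu> * (t - \<sigma>))) * indicator {..t} \<sigma>) \<partial>lborel)"
    by (intro nn_integral_cong nn_integral_multc) simp
  also have "\<dots> = (\<integral>\<^sup>+\<sigma>. ennreal (erlang_density (Suc j) \<mu> \<sigma>) * h \<sigma> * ennreal (exp (- \<mu> * (t - \<sigma>))) * indicator {..t} \<sigma> \<partial>lborel)"
    using convolution_erlang_density[OF mu_pos, of j 0]
    by (intro nn_integral_cong) (simp add: fun_eq_iff mult.assoc)
  finally show ?case .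
qed

end



context expo begin

lemma AE_pos: "AE \<omega> in P. \<forall>i. 0 < \<omega> !! i"
proof -
  have "AE x in E. 0 < x"
    apply (subst AE_density)
     apply simp
    using AE_lborel_singleton[of 0] by eventually_elim (auto simp: erlang_density_def)
  then have "AE \<omega> in P. stream_all (\<lambda>x. 0 < x) \<omega>"
    by (intro AE_stream_all) simp_all
  then show ?thesis
    by eventually_elim (simp add: sset_range)
qed

lemma emeasure_all_le:
  "emeasure P {\<omega>\<in>space P. \<forall>i<j. \<omega> !! i \<le> t} = emeasure E {..t} ^ j"
proof (induction j)
  case 0
  interpret S: prob_space P by (rule PP)
  show ?case using S.emeasure_space_1 by simp
next
  case (Suc j)
  have "emeasure P {\<omega>\<in>space P. \<forall>i<Suc j. \<omega> !! i \<le> t}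
      = (\<integral>\<^sup>+y. emeasure P {x\<in>space P. y ## x \<in> {\<omega>\<in>space P. \<forall>i<Suc j. \<omega> !! i \<le> t}} \<partial>E)"
    by (rule emeasure_stream_space) measurable
  also have "\<dots> = (\<integral>\<^sup>+y. emeasure P {\<omega>\<in>space P. \<forall>i<j. \<omega> !! i \<le> t} * indicator {..t} y \<partial>E)"
  proof (rule nn_integral_cong)
    fix y
    have "{x\<in>space P. y ## x \<in> {\<omega>\<in>space P. \<forall>i<Suc j. \<omega> !! i \<le> t}} =
          (if y \<le> t then {\<omega>\<in>space P. \<forall>i<j. \<omega> !! i \<le> t} else {})"
      by (auto simp: space_stream_space streams_UNIV All_less_Suc2)
    then show "emeasure P {x\<in>space P. y ## x \<in> {\<omega>\<in>space P. \<forall>i<Suc j. \<omega> !! i \<le> t}} =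
      emeasure P {\<omega>\<in>space P. \<forall>i<j. \<omega> !! i \<le> t} * indicator {..t} y"
      by simp
  qed
  also have "\<dots> = emeasure P {\<omega>\<in>space P. \<forall>i<j. \<omega> !! i \<le> t} * emeasure E {..t}"
    by (subst nn_integral_cmult_indicator) simp_all
  finally show ?case using Suc.IH by (simp add: mult.commute)
qed

lemma AE_bounded:
  assumes t: "0 \<le> t"
  shows "AE \<omega> in P. \<exists>i. t < \<omega> !! i"
proof (rule AE_I)
  let ?N = "{\<omega>\<in>space P. \<forall>i. \<omega> !! i \<le> t}"
  show "{\<omega> \<in> space P. \<not> (\<exists>i. t < \<omega> !! i)} \<subseteq> ?N" by (auto simp: not_less)
  show "?N \<in> sets P" by measurable
  define q where "q = 1 - exp (- \<mu> * t)"
  have q: "0 \<le> q" "q < 1"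
    using mu_pos t unfolding q_def by (auto intro: mult_nonneg_nonneg)
  have Eq: "emeasure E {..t} = ennreal q"
    using emeasure_erlang_density[OF mu_pos, of 0 t] t by (simp add: erlang_CDF_def q_def)
  have le: "emeasure P ?N \<le> ennreal (q ^ j)" for j
  proof -
    have "emeasure P ?N \<le> emeasure P {\<omega>\<in>space P. \<forall>i<j. \<omega> !! i \<le> t}"
      by (rule emeasure_mono) (auto, measurable)
    also have "\<dots> = ennreal (q ^ j)"
      using q by (simp add: emeasure_all_le Eq ennreal_power)
    finally show ?thesis .
  qed
  have "(\<lambda>j. ennreal (q ^ j)) \<longlonglongrightarrow> ennreal 0"
    using q by (intro tendsto_ennrealI LIMSEQ_power_zero) simp
  then have "emeasure P ?N \<le> 0"
    using le by (intro LIMSEQ_le_const[of "\<lambda>j. ennreal (q ^ j)"]) auto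
  then show "emeasure P ?N = 0" by simp
qed

lemma evt_mono:
  assumes pos: "\<forall>i. 0 < \<omega> !! i" and "j < k"
  shows "evt \<omega> j < evt \<omega> k"
  using \<open>j < k\<close>
proof (induction k)
  case 0 then show ?case by simp
next
  case (Suc k)
  have "evt \<omega> (Suc k) = evt \<omega> k + \<omega> !! Suc k" by (rule evt_Suc)
  moreover have "0 < \<omega> !! Suc k" using pos by blast
  ultimately have "evt \<omega> k < evt \<omega> (Suc k)" by linarith
  with Suc show ?case by (cases "j = k") auto
qed

lemma snth_le_evt:
  assumes pos: "\<forall>i. 0 < \<omega> !! i"
  shows "\<omega> !! i \<le> evt \<omega> i"
proof (cases i)
  case 0 then show ?thesis by simp
next
  case (Suc k)
  have "\<omega> !! 0 \<le> evt \<omega> k" using evt_mono[OF pos, of 0 k]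
    by (cases k) auto
  moreover have "0 < \<omega> !! 0" using pos by blast
  ultimately have "0 < evt \<omega> k" by linarith
  moreover have "evt \<omega> (Suc k) = evt \<omega> k + \<omega> !! Suc k" by (rule evt_Suc)
  ultimately show ?thesis using Suc by simp
qed

lemma pointwise:
  fixes c :: ennreal and h :: "real \<Rightarrow> ennreal"
  assumes pos: "\<forall>i. 0 < \<omega> !! i" and bnd: "\<exists>i. t < \<omega> !! i"
  shows "(if card {j. ltb incl (evt \<omega> j) t} = 0 then c else h (evt \<omega> (card {j. ltb incl (evt \<omega> j) t} - 1)))
    = (if \<not> ltb incl (\<omega> !! 0) t then c else 0) +
      (\<Sum>j. if ltb incl (evt \<omega> j) t \<and> \<not> ltb incl (evt \<omega> (Suc j)) t then h (evt \<omega> j) else 0)"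
proof -
  define S where "S = {j. ltb incl (evt \<omega> j) t}"
  have down: "j \<in> S" if "k \<in> S" "j \<le> k" for j k
  proof (cases "j = k")
    case False
    then have "evt \<omega> j < evt \<omega> k" using evt_mono[OF pos] that by simp
    then show ?thesis using that ltb_le[of incl "evt \<omega> k" t] by (auto simp: S_def ltb_def)
  qed (use that in simp)
  obtain i where i: "t < \<omega> !! i" using bnd by blast
  have "i \<notin> S"
    using snth_le_evt[OF pos, of i] i ltb_le[of incl "evt \<omega> i" t] by (auto simp: S_def)
  define m where "m = (LEAST i. i \<notin> S)"
  have m: "m \<notin> S" using \<open>i \<notin> S\<close> unfolding m_def by (rule LeastI)
  have Seq: "S = {..<m}"
  proof safe
    fix j assume "j \<in> S"
    show "j < m"
    proof (rule ccontr)
      assume "\<not> j < m" then have "m \<le> j" by simp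
      then show False using down[OF \<open>j \<in> S\<close>] m by blast
    qed
  next
    fix j assume "j < m"
    then show "j \<in> S" unfolding m_def using not_less_Least by blast
  qed
  have cardS: "card S = m" using Seq by simp
  show ?thesis
  proof (cases m)
    case 0
    then have "S = {}" using Seq by simp
    then have nl: "\<not> ltb incl (evt \<omega> j) t" for j by (auto simp: S_def)
    have "\<not> ltb incl (\<omega> !! 0) t" using nl[of 0] by simp
    then show ?thesis using cardS 0 nl by (simp add: S_def[symmetric] suminf_zero)
  next
    case (Suc j0)
    have "(\<Sum>j. if ltb incl (evt \<omega> j) t \<and> \<not> ltb incl (evt \<omega> (Suc j)) t then h (evt \<omega> j) else 0)
        = (\<Sum>j\<in>{j0}. if ltb incl (evt \<omega> j) t \<and> \<not> ltb incl (evt \<omega> (Suc j)) t then h (evt \<omega> j) else 0)"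
    proof (rule suminf_finite)
      fix j assume "j \<notin> {j0}"
      then have "\<not> (j \<in> S \<and> Suc j \<notin> S)" using Seq Suc by auto
      then show "(if ltb incl (evt \<omega> j) t \<and> \<not> ltb incl (evt \<omega> (Suc j)) t then h (evt \<omega> j) else 0) = 0"
        by (auto simp: S_def)
    qed simp
    also have "\<dots> = h (evt \<omega> j0)"
      using Seq Suc by (auto simp: S_def set_eq_iff)
    finally have sum: "(\<Sum>j. if ltb incl (evt \<omega> j) t \<and> \<not> ltb incl (evt \<omega> (Suc j)) t then h (evt \<omega> j) else 0) = h (evt \<omega> j0)" .
    have "0 \<in> S" using Seq Suc by simp
    then have "ltb incl (\<omega> !! 0) t" by (simp add: S_def)
    then show ?thesis using sum cardS Suc by (simp add: S_def[symmetric])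
  qed
qed

lemma erlang_sums:
  assumes "0 \<le> \<tau>"
  shows "(\<lambda>j. erlang_density j \<mu> \<tau>) sums \<mu>"
proof -
  have "(\<lambda>j. (\<mu> * exp (- \<mu> * \<tau>)) * ((\<mu> * \<tau>) ^ j /\<^sub>R fact j)) sums ((\<mu> * exp (- \<mu> * \<tau>)) * exp (\<mu> * \<tau>))"
    by (intro sums_mult exp_converges)
  moreover have "(\<mu> * exp (- \<mu> * \<tau>)) * exp (\<mu> * \<tau>) = \<mu>"
    by (simp add: mult.assoc exp_add[symmetric])
  moreover have "(\<mu> * exp (- \<mu> * \<tau>)) * ((\<mu> * \<tau>) ^ j /\<^sub>R fact j) = erlang_density j \<mu> \<tau>" for j
    using assms by (simp add: erlang_density_def power_mult_distrib field_simps)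
  ultimately have A: "(\<lambda>j. erlang_density j \<mu> \<tau>) sums ((\<mu> * exp (- \<mu> * \<tau>)) * exp (\<mu> * \<tau>))"
    by simp
  moreover have "(\<mu> * exp (- \<mu> * \<tau>)) * exp (\<mu> * \<tau>) = \<mu>"
    by (simp add: exp_minus field_simps)
  ultimately show ?thesis by metis
qed

lemma erlang_suminf_ennreal:
  "(\<Sum>j. ennreal (erlang_density j \<mu> \<tau>)) = ennreal (if 0 \<le> \<tau> then \<mu> else 0)"
proof (cases "0 \<le> \<tau>")
  case True
  have "(\<Sum>j. ennreal (erlang_density j \<mu> \<tau>)) = ennreal \<mu>"
    by (rule suminf_ennreal_eq[OF _ erlang_sums[OF True]]) (use mu_pos in simp)
  then show ?thesis using True by simp
next
  case False
  then show ?thesis by (simp add: erlang_density_def)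
qed

lemma stream_main:
  fixes c :: ennreal and h :: "real \<Rightarrow> ennreal"
  assumes [measurable]: "h \<in> borel_measurable borel" and t: "0 \<le> t"
  shows "(\<integral>\<^sup>+\<omega>. (if card {j. ltb incl (evt \<omega> j) t} = 0 then c else h (evt \<omega> (card {j. ltb incl (evt \<omega> j) t} - 1))) \<partial>P)
     = c * ennreal (exp (- \<mu> * t)) + (\<integral>\<^sup>+\<tau>. ennreal (\<mu> * exp (- \<mu> * (t - \<tau>))) * h \<tau> * indicator {0..t} \<tau> \<partial>lborel)"
proof -
  let ?F = "\<lambda>j \<omega>. if ltb incl (evt \<omega> j) t \<and> \<not> ltb incl (evt \<omega> (Suc j)) t then h (evt \<omega> j) else 0"
  let ?X = "\<lambda>\<tau>. h \<tau> * ennreal (exp (- \<mu> * (t - \<tau>))) * indicator {..t} \<tau>"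
  have "(\<integral>\<^sup>+\<omega>. (if card {j. ltb incl (evt \<omega> j) t} = 0 then c else h (evt \<omega> (card {j. ltb incl (evt \<omega> j) t} - 1))) \<partial>P)
     = (\<integral>\<^sup>+\<omega>. (if \<not> ltb incl (\<omega> !! 0) t then c else 0) + (\<Sum>j. ?F j \<omega>) \<partial>P)"
    apply (rule nn_integral_cong_AE)
    using AE_pos AE_bounded[OF t] apply eventually_elim
    by (rule pointwise)
  also have "\<dots> = (\<integral>\<^sup>+\<omega>. (if \<not> ltb incl (\<omega> !! 0) t then c else 0) \<partial>P) + (\<integral>\<^sup>+\<omega>. (\<Sum>j. ?F j \<omega>) \<partial>P)"
    by (rule nn_integral_add) measurable
  also have "(\<integral>\<^sup>+\<omega>. (if \<not> ltb incl (\<omega> !! 0) t then c else 0) \<partial>P) = (\<integral>\<^sup>+\<omega>. c * indicator {y. \<not> ltb incl y t} (\<omega> !! 0) \<partial>P)"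
    by (intro nn_integral_cong) (simp split: split_indicator)
  also have "\<dots> = c * (\<integral>\<^sup>+\<omega>. indicator {y. \<not> ltb incl y t} (\<omega> !! 0) \<partial>P)"
    by (rule nn_integral_cmult) measurable
  also have "(\<integral>\<^sup>+\<omega>. indicator {y. \<not> ltb incl y t} (\<omega> !! 0) \<partial>P) = (\<integral>\<^sup>+y. indicator {y. \<not> ltb incl y t} y \<partial>E)"
    by (rule nn_integral_snth0) measurable
  also have "\<dots> = ennreal (exp (- \<mu> * t))"
    by (rule G_lemma[OF t])
  also have "(\<integral>\<^sup>+\<omega>. (\<Sum>j. ?F j \<omega>) \<partial>P) = (\<Sum>j. (\<integral>\<^sup>+\<omega>. ?F j \<omega> \<partial>P))"
    by (rule nn_integral_suminf) measurable
  also have "\<dots> = (\<Sum>j. (\<integral>\<^sup>+\<tau>. ennreal (erlang_density j \<mu> \<tau>) * ?X \<tau> \<partial>lborel))"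
    using T_formula[of h incl] unfolding Tj_def by (simp add: mult.assoc)
  also have "\<dots> = (\<integral>\<^sup>+\<tau>. (\<Sum>j. ennreal (erlang_density j \<mu> \<tau>) * ?X \<tau>) \<partial>lborel)"
    by (rule nn_integral_suminf[symmetric]) measurable
  also have "\<dots> = (\<integral>\<^sup>+\<tau>. ennreal (\<mu> * exp (- \<mu> * (t - \<tau>))) * h \<tau> * indicator {0..t} \<tau> \<partial>lborel)"
  proof (rule nn_integral_cong)
    fix \<tau> :: real
    have "(\<Sum>j. ennreal (erlang_density j \<mu> \<tau>) * ?X \<tau>) = (\<Sum>j. ennreal (erlang_density j \<mu> \<tau>)) * ?X \<tau>"
      by (rule ennreal_suminf_multc)
    also have "\<dots> = ennreal (if 0 \<le> \<tau> then \<mu> else 0) * ?X \<tau>"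
      by (simp add: erlang_suminf_ennreal)
    also have "\<dots> = ennreal (\<mu> * exp (- \<mu> * (t - \<tau>))) * h \<tau> * indicator {0..t} \<tau>"
      using mu_pos by (auto simp: ennreal_mult ac_simps split: split_indicator)
    finally show "(\<Sum>j. ennreal (erlang_density j \<mu> \<tau>) * ?X \<tau>) = ennreal (\<mu> * exp (- \<mu> * (t - \<tau>))) * h \<tau> * indicator {0..t} \<tau>" .
  qed
  finally show ?thesis .
qed

end



lemma measurable_card_nat:
  assumes P[measurable]: "\<And>j. Measurable.pred M (P j)"
  shows "(\<lambda>x. card {j::nat. P j x}) \<in> measurable M (count_space UNIV)"
  unfolding measurable_count_space_eq2_countable
proof safe
  fix a :: nat
  let ?U = "(if a = 0 then {x\<in>space M. \<forall>N. \<exists>j\<ge>N. P j x} else {}) \<union>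
            (\<Union>F\<in>{F. finite F \<and> card F = a}. {x\<in>space M. \<forall>j. P j x \<longleftrightarrow> j \<in> F})"
  have eq: "(\<lambda>x. card {j. P j x}) -` {a} \<inter> space M = ?U"
  proof (intro set_eqI iffI)
    fix x assume "x \<in> (\<lambda>x. card {j. P j x}) -` {a} \<inter> space M"
    then have x: "x \<in> space M" "card {j. P j x} = a" by auto
    show "x \<in> ?U"
    proof (cases "finite {j. P j x}")
      case True
      then show ?thesis using x by auto
    next
      case False
      then have "\<forall>N. \<exists>j\<ge>N. P j x" using infinite_nat_iff_unbounded_le by auto
      then show ?thesis using x False by auto
    qed
  next
    fix x assume xU: "x \<in> ?U"
    then have xs: "x \<in> space M" by (auto split: if_splits)
    have "card {j. P j x} = a"
    proof (cases "a = 0")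
      case True
      with xU consider "\<forall>N. \<exists>j\<ge>N. P j x" | F where "finite F" "card F = a" "\<forall>j. P j x \<longleftrightarrow> j \<in> F"
        by auto
      then show ?thesis
      proof cases
        case 1
        then have "infinite {j. P j x}" using infinite_nat_iff_unbounded_le by auto
        then show ?thesis using True by simp
      next
        case 2
        then have "{j. P j x} = F" by auto
        then show ?thesis using 2 by simp
      qed
    next
      case False
      with xU obtain F where "finite F" "card F = a" "\<forall>j. P j x \<longleftrightarrow> j \<in> F"
        by auto
      then have "{j. P j x} = F" by auto
      then show ?thesis using \<open>card F = a\<close> by simp
    qed
    then show "x \<in> (\<lambda>x. card {j. P j x}) -` {a} \<inter> space M" using xs by simp
  qed
  have "countable {F::nat set. finite F \<and> card F = a}"
    by (rule countable_subset[OF _ countable_Collect_finite]) auto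
  moreover have "{x\<in>space M. \<forall>j. P j x \<longleftrightarrow> j \<in> F} \<in> sets M" for F :: "nat set"
  proof -
    have "{x\<in>space M. \<forall>j. P j x \<longleftrightarrow> j \<in> F} = {x\<in>space M. \<forall>j. (if j \<in> F then P j x else \<not> P j x)}"
      by auto
    also have "\<dots> \<in> sets M" by measurable
    finally show ?thesis .
  qed
  moreover have "{x\<in>space M. \<forall>N. \<exists>j\<ge>N. P j x} \<in> sets M" by measurable
  ultimately have "?U \<in> sets M"
    by (intro sets.Un) (auto intro!: sets.countable_UN')
  then show "(\<lambda>x. card {j. P j x}) -` {a} \<inter> space M \<in> sets M" using eq by simp
qed simp

lemma line_evt_eq: "line_evt \<omega> l j = evt (\<omega> l) j"
  by (simp add: line_evt_def evt_def)

lemma line_age_Suc: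
  "line_age \<omega> x0 incl (Suc k) t =
     (if card {j. ltb incl (evt (\<omega> k) j) t} = 0 then x0 (Suc k) + t
      else line_age \<omega> x0 False k (evt (\<omega> k) (card {j. ltb incl (evt (\<omega> k) j) t} - 1))
           + (t - evt (\<omega> k) (card {j. ltb incl (evt (\<omega> k) j) t} - 1)))"
  by (simp add: Let_def line_evt_eq ltb_def)

lemma line_age_dep:
  "(\<And>l. l < k \<Longrightarrow> \<omega> l = \<omega>' l) \<Longrightarrow> line_age \<omega> x0 incl k t = line_age \<omega>' x0 incl k t"
proof (induction k arbitrary: incl t)
  case 0 then show ?case by simp
next
  case (Suc k)
  have IH: "line_age \<omega> x0 False k \<tau> = line_age \<omega>' x0 False k \<tau>" for \<tau>
    using Suc.prems by (intro Suc.IH) auto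
  have "\<omega> k = \<omega>' k" using Suc.prems by simp
  then show ?case by (simp only: line_age_Suc IH)
qed

lemma measurable_line_age:
  assumes comp: "\<And>l i. l < k \<Longrightarrow> (\<lambda>\<omega>. \<omega> l !! i) \<in> borel_measurable N"
  shows "(\<lambda>p. line_age (fst p) x0 incl k (snd p)) \<in> borel_measurable (N \<Otimes>\<^sub>M borel)"
  using comp
proof (induction k arbitrary: incl)
  case 0 then show ?case by simp
next
  case (Suc k)
  have c[measurable]: "(\<lambda>p. fst p k !! i) \<in> borel_measurable (N \<Otimes>\<^sub>M borel)" for i
    using measurable_compose[OF measurable_fst Suc.prems[of k i]] by simp
  have ev[measurable]: "(\<lambda>p. evt (fst p k) j) \<in> borel_measurable (N \<Otimes>\<^sub>M borel)" for j
    unfolding evt_def by measurable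
  have IH: "(\<lambda>p. line_age (fst p) x0 False k (snd p)) \<in> borel_measurable (N \<Otimes>\<^sub>M borel)"
    using Suc.prems by (intro Suc.IH) auto
  have Nm: "(\<lambda>p. card {j. ltb incl (evt (fst p k) j) (snd p)}) \<in> measurable (N \<Otimes>\<^sub>M borel) (count_space UNIV)"
    by (rule measurable_card_nat) measurable
  have f: "(\<lambda>p. if m = 0 then x0 (Suc k) + snd p
      else line_age (fst p) x0 False k (evt (fst p k) (m - 1)) + (snd p - evt (fst p k) (m - 1)))
     \<in> borel_measurable (N \<Otimes>\<^sub>M borel)" for m
  proof -
    have "(\<lambda>p. (fst p, evt (fst p k) (m - 1))) \<in> measurable (N \<Otimes>\<^sub>M borel) (N \<Otimes>\<^sub>M borel)"
      by measurable
    from measurable_compose[OF this IH]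
    have [measurable]: "(\<lambda>p. line_age (fst p) x0 False k (evt (fst p k) (m - 1))) \<in> borel_measurable (N \<Otimes>\<^sub>M borel)"
      by simp
    show ?thesis by measurable
  qed
  show ?case
    unfolding line_age_Suc
    by (rule measurable_compose_countable[OF f Nm])
qed




locale line =
  fixes \<mu> :: "nat \<Rightarrow> real" and x0 :: "nat \<Rightarrow> real" and s :: real
  assumes mu_pos: "\<And>l. 0 < \<mu> l"
begin

abbreviation Ms :: "nat \<Rightarrow> (real stream) measure" where
  "Ms l \<equiv> stream_space (density lborel (exponential_density (\<mu> l)))"

lemma prob_Ms: "prob_space (Ms l)"
  using expo.PP[of "\<mu> l"] mu_pos by (simp add: expo_def)

lemma PS: "product_prob_space Ms"
  unfolding product_prob_space_def product_sigma_finite_def product_prob_space_axioms_def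
  using prob_Ms by (auto intro: prob_space_imp_sigma_finite)

sublocale product_prob_space Ms
  by (rule PS)

lemma prob_Pi: "prob_space (PiM I Ms)"
  by (rule prob_space_PiM) (rule prob_Ms)

definition Fk :: "nat \<Rightarrow> bool \<Rightarrow> nat \<Rightarrow> real \<Rightarrow> ennreal" where
  "Fk m incl k t = (\<integral>\<^sup>+\<omega>. ennreal (exp (s * line_age \<omega> x0 incl k t)) \<partial>PiM {..<m} Ms)"

lemma comp_meas:
  assumes "l \<in> I"
  shows "(\<lambda>\<omega>. \<omega> l !! i) \<in> borel_measurable (PiM I Ms)"
proof -
  have "(\<lambda>\<omega>. \<omega> l) \<in> measurable (PiM I Ms) (Ms l)"
    by (rule measurable_component_singleton[OF assms])
  from measurable_compose[OF this meas_snth_dens] show ?thesis .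
qed

lemma meas_age_Pi:
  "k \<le> m \<Longrightarrow> (\<lambda>p. line_age (fst p) x0 incl k (snd p)) \<in> borel_measurable (PiM {..<m} Ms \<Otimes>\<^sub>M borel)"
  by (rule measurable_line_age) (rule comp_meas, simp)

lemma meas_age_fix:
  assumes "k \<le> m"
  shows "(\<lambda>\<omega>. line_age \<omega> x0 incl k t) \<in> borel_measurable (PiM {..<m} Ms)"
proof -
  have "(\<lambda>\<omega>. (\<omega>, t)) \<in> measurable (PiM {..<m} Ms) (PiM {..<m} Ms \<Otimes>\<^sub>M borel)"
    by measurable
  from measurable_compose[OF this meas_age_Pi[OF assms]] show ?thesis by simp
qed

lemma Fk_extend:
  assumes "k \<le> m"
  shows "Fk (Suc m) incl k t = Fk m incl k t"
proof -
  interpret Pm: prob_space "Ms m" by (rule prob_Ms)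
  have set: "{..<Suc m} = insert m {..<m}" by auto
  have meas: "(\<lambda>\<omega>. ennreal (exp (s * line_age \<omega> x0 incl k t))) \<in> borel_measurable (PiM (insert m {..<m}) Ms)"
    using meas_age_fix[OF le_SucI[OF assms], of incl t] unfolding set by measurable
  have "Fk (Suc m) incl k t = (\<integral>\<^sup>+x. (\<integral>\<^sup>+y. ennreal (exp (s * line_age (x(m := y)) x0 incl k t)) \<partial>Ms m) \<partial>PiM {..<m} Ms)"
    unfolding Fk_def set by (rule product_nn_integral_insert[OF _ _ meas]) simp_all
  also have "\<dots> = (\<integral>\<^sup>+x. ennreal (exp (s * line_age x x0 incl k t)) \<partial>PiM {..<m} Ms)"
  proof (rule nn_integral_cong)
    fix x :: "nat \<Rightarrow> real stream"
    have "line_age (x(m := y)) x0 incl k t = line_age x x0 incl k t" for y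
      by (rule line_age_dep) (use assms in auto)
    then show "(\<integral>\<^sup>+y. ennreal (exp (s * line_age (x(m := y)) x0 incl k t)) \<partial>Ms m) = ennreal (exp (s * line_age x x0 incl k t))"
      by (simp add: prob_space.emeasure_space_1[OF prob_Ms])
  qed
  finally show ?thesis unfolding Fk_def .
qed

lemma Fk_eq:
  assumes "k \<le> m"
  shows "Fk m incl k t = Fk k incl k t"
  using assms
proof (induction m rule: dec_induct)
  case (step m)
  then show ?case using Fk_extend[OF step(1)] by simp
qed simp

lemma Fk_meas: "(\<lambda>\<tau>. Fk k incl k \<tau>) \<in> borel_measurable borel"
proof -
  interpret Pk: prob_space "PiM {..<k} Ms" by (rule prob_Pi)
  have "(\<lambda>p. (snd p, fst p)) \<in> measurable (borel \<Otimes>\<^sub>M PiM {..<k} Ms) (PiM {..<k} Ms \<Otimes>\<^sub>M borel)"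
    by measurable
  from measurable_compose[OF this meas_age_Pi[of k k incl]]
  have [measurable]: "(\<lambda>p. line_age (snd p) x0 incl k (fst p)) \<in> borel_measurable (borel \<Otimes>\<^sub>M PiM {..<k} Ms)"
    by simp
  have "case_prod (\<lambda>\<tau> \<omega>. ennreal (exp (s * line_age \<omega> x0 incl k \<tau>))) \<in> borel_measurable (borel \<Otimes>\<^sub>M PiM {..<k} Ms)"
    unfolding case_prod_beta by measurable
  then show ?thesis
    unfolding Fk_def by (rule Pk.borel_measurable_nn_integral)
qed

lemma Fk_rec:
  assumes t: "0 \<le> t"
  shows "Fk (Suc k) incl (Suc k) t = ennreal (exp (s * (x0 (Suc k) + t))) * ennreal (exp (- \<mu> k * t))
    + (\<integral>\<^sup>+\<tau>. ennreal (\<mu> k * exp (- \<mu> k * (t - \<tau>))) * (Fk k False k \<tau> * ennreal (exp (s * (t - \<tau>)))) * indicator {0..t} \<tau> \<partial>lborel)"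
proof -
  interpret E: expo "\<mu> k" using mu_pos by (simp add: expo_def)
  interpret Pk: prob_space "PiM {..<k} Ms" by (rule prob_Pi)
  let ?N = "\<lambda>y. card {j. ltb incl (evt y j) t}"
  let ?h = "\<lambda>\<tau>. Fk k False k \<tau> * ennreal (exp (s * (t - \<tau>)))"
  let ?c = "ennreal (exp (s * (x0 (Suc k) + t)))"
  have set: "{..<Suc k} = insert k {..<k}" by auto
  have meas: "(\<lambda>\<omega>. ennreal (exp (s * line_age \<omega> x0 incl (Suc k) t))) \<in> borel_measurable (PiM (insert k {..<k}) Ms)"
    using meas_age_fix[of "Suc k" "Suc k" incl t] unfolding set by measurable
  have "Fk (Suc k) incl (Suc k) t = (\<integral>\<^sup>+y. (\<integral>\<^sup>+x. ennreal (exp (s * line_age (x(k := y)) x0 incl (Suc k) t)) \<partial>PiM {..<k} Ms) \<partial>Ms k)"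
    unfolding Fk_def set by (rule product_nn_integral_insert_rev[OF _ _ meas]) simp_all
  also have "\<dots> = (\<integral>\<^sup>+y. (if ?N y = 0 then ?c else ?h (evt y (?N y - 1))) \<partial>Ms k)"
  proof (rule nn_integral_cong)
    fix y :: "real stream"
    have dep: "line_age (x(k := y)) x0 False k \<tau> = line_age x x0 False k \<tau>" for x \<tau>
      by (rule line_age_dep) auto
    show "(\<integral>\<^sup>+x. ennreal (exp (s * line_age (x(k := y)) x0 incl (Suc k) t)) \<partial>PiM {..<k} Ms) =
          (if ?N y = 0 then ?c else ?h (evt y (?N y - 1)))"
    proof (cases "?N y = 0")
      case True
      then show ?thesis
        by (simp del: line_age.simps add: line_age_Suc Pk.emeasure_space_1)
    next
      case False
      define \<tau> where "\<tau> = evt y (?N y - 1)"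
      have "(\<integral>\<^sup>+x. ennreal (exp (s * line_age (x(k := y)) x0 incl (Suc k) t)) \<partial>PiM {..<k} Ms)
          = (\<integral>\<^sup>+x. ennreal (exp (s * line_age x x0 False k \<tau>)) * ennreal (exp (s * (t - \<tau>))) \<partial>PiM {..<k} Ms)"
        using False
        by (intro nn_integral_cong)
           (simp del: line_age.simps add: line_age_Suc dep \<tau>_def distrib_left exp_add ennreal_mult)
      also have "\<dots> = Fk k False k \<tau> * ennreal (exp (s * (t - \<tau>)))"
        unfolding Fk_def by (rule nn_integral_multc) (use meas_age_fix[of k k False \<tau>] in measurable)
      finally show ?thesis using False by (simp add: \<tau>_def)
    qed
  qed
  also have "\<dots> = ?c * ennreal (exp (- \<mu> k * t))
    + (\<integral>\<^sup>+\<tau>. ennreal (\<mu> k * exp (- \<mu> k * (t - \<tau>))) * ?h \<tau> * indicator {0..t} \<tau> \<partial>lborel)"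
    by (rule E.stream_main[OF _ t]) (use Fk_meas[of k False] in measurable)
  finally show ?thesis .
qed

end



lemma exp_nn:
  assumes a: "0 < a"
  shows "(\<integral>\<^sup>+u. ennreal (exp (- a * u) * indicator {0..} u) \<partial>lborel) = ennreal (1 / a)"
proof -
  have "emeasure (density lborel (exponential_density a)) (space (density lborel (exponential_density a))) = 1"
    using prob_space.emeasure_space_1[OF prob_space_exponential_density[OF a]] .
  then have one: "(\<integral>\<^sup>+u. ennreal (exponential_density a u) \<partial>lborel) = 1"
    by (simp add: emeasure_density)
  have "(\<integral>\<^sup>+u. ennreal (exp (- a * u) * indicator {0..} u) \<partial>lborel)
      = (\<integral>\<^sup>+u. ennreal (1 / a) * ennreal (exponential_density a u) \<partial>lborel)"
    using a by (intro nn_integral_cong) (auto simp: exponential_density_def ennreal_mult[symmetric] mult.commute split: split_indicator)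
  also have "\<dots> = ennreal (1 / a)"
    by (subst nn_integral_cmult) (simp_all add: one)
  finally show ?thesis .
qed

lemma exp_integrable:
  fixes a :: real
  assumes a: "0 < a"
  shows "integrable lborel (\<lambda>u. exp (- a * u) * indicator {0..} u)"
proof (rule integrableI_nonneg)
  show "(\<integral>\<^sup>+u. ennreal (exp (- a * u) * indicator {0..} u) \<partial>lborel) < \<infinity>"
    unfolding exp_nn[OF a] by simp
qed simp_all

lemma exp_integral:
  fixes a :: real
  assumes a: "0 < a"
  shows "(\<integral>u. exp (- a * u) * indicator {0..} u \<partial>lborel) = 1 / a"
proof -
  have "ennreal (\<integral>u. exp (- a * u) * indicator {0..} u \<partial>lborel) = ennreal (1 / a)"
    using nn_integral_eq_integral[OF exp_integrable[OF a]] exp_nn[OF a] by simp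
  moreover have "0 \<le> (\<integral>u. exp (- a * u) * indicator {0..} u \<partial>lborel)"
    by (intro integral_nonneg_AE AE_I2) simp
  ultimately show ?thesis using a by simp
qed

lemma conv_limit:
  fixes f :: "real \<Rightarrow> real"
  assumes fm[measurable]: "f \<in> borel_measurable borel"
    and fb: "\<And>\<tau>. 0 \<le> \<tau> \<Longrightarrow> 0 \<le> f \<tau> \<and> f \<tau> \<le> B"
    and lim: "(f \<longlongrightarrow> L) at_top" and a: "0 < a"
  shows "((\<lambda>t. \<integral>u. exp (- a * u) * f (t - u) * indicator {0..t} u \<partial>lborel) \<longlongrightarrow> L / a) at_top"
proof -
  have "((\<lambda>t. \<integral>u. exp (- a * u) * f (t - u) * indicator {0..t} u \<partial>lborel) \<longlongrightarrow>
        (\<integral>u. L * (exp (- a * u) * indicator {0..} u) \<partial>lborel)) at_top"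
  proof (rule integral_dominated_convergence_at_top[where w = "\<lambda>u. B * (exp (- a * u) * indicator {0..} u)"])
    show "(\<lambda>u. L * (exp (- a * u) * indicator {0..} u)) \<in> borel_measurable lborel"
      by measurable
    show "(\<lambda>u. exp (- a * u) * f (t - u) * indicator {0..t} u) \<in> borel_measurable lborel" for t
      by measurable
    show "integrable lborel (\<lambda>u. B * (exp (- a * u) * indicator {0..} u))"
      using exp_integrable[OF a] by (rule integrable_mult_right)
    show "AE u in lborel. ((\<lambda>t. exp (- a * u) * f (t - u) * indicator {0..t} u) \<longlongrightarrow> L * (exp (- a * u) * indicator {0..} u)) at_top"
    proof (rule AE_I2)
      fix u :: real
      show "((\<lambda>t. exp (- a * u) * f (t - u) * indicator {0..t} u) \<longlongrightarrow> L * (exp (- a * u) * indicator {0..} u)) at_top"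
      proof (cases "0 \<le> u")
        case True
        have tm: "filterlim (\<lambda>t. t - u) at_top at_top"
          using filterlim_tendsto_add_at_top[OF tendsto_const[of "- u"] filterlim_ident] by simp
        have "((\<lambda>t. exp (- a * u) * f (t - u)) \<longlongrightarrow> exp (- a * u) * L) at_top"
          by (intro tendsto_mult tendsto_const filterlim_compose[OF lim tm])
        then have l1: "((\<lambda>t. exp (- a * u) * f (t - u)) \<longlongrightarrow> L * (exp (- a * u) * indicator {0..} u)) at_top"
          using True by (simp add: mult.commute)
        show ?thesis
        proof (rule Lim_transform_eventually[OF l1])
          show "\<forall>\<^sub>F t in at_top. exp (- a * u) * f (t - u) = exp (- a * u) * f (t - u) * indicator {0..t} u"
            using eventually_ge_at_top[of u] by eventually_elim (use True in simp)
        qed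
      next
        case False
        then show ?thesis by simp
      qed
    qed
    show "\<forall>\<^sub>F t in at_top. AE u in lborel. norm (exp (- a * u) * f (t - u) * indicator {0..t} u) \<le> B * (exp (- a * u) * indicator {0..} u)"
    proof (intro always_eventually allI AE_I2)
      fix t u :: real
      show "norm (exp (- a * u) * f (t - u) * indicator {0..t} u) \<le> B * (exp (- a * u) * indicator {0..} u)"
      proof (cases "0 \<le> u \<and> u \<le> t")
        case True
        then have "0 \<le> f (t - u)" "f (t - u) \<le> B" using fb[of "t - u"] by auto
        then show ?thesis using True by (simp add: abs_mult mult.commute mult_left_mono)
      next
        case False
        have "0 \<le> B" using fb[of 0] by simp
        then show ?thesis using False by (auto split: split_indicator)
      qed
    qed
  qed
  also have "(\<integral>u. L * (exp (- a * u) * indicator {0..} u) \<partial>lborel) = L / a"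
    using exp_integral[OF a] by simp
  finally show ?thesis .
qed




context line begin

lemma Fk_0: "Fk 0 incl 0 t = 1"
  unfolding Fk_def using prob_space.emeasure_space_1[OF prob_Pi[of "{..<0}"]] by simp

lemma affine_int:
  fixes G :: "real \<Rightarrow> ennreal"
  assumes [measurable]: "G \<in> borel_measurable borel"
  shows "(\<integral>\<^sup>+\<tau>. G \<tau> \<partial>lborel) = (\<integral>\<^sup>+u. G (t - u) \<partial>lborel)"
  using nn_integral_real_affine[OF assms, of "-1" t] by simp

lemma bound_pt:
  fixes f :: "real \<Rightarrow> real"
  assumes fb: "\<And>\<tau>. 0 \<le> \<tau> \<Longrightarrow> 0 \<le> f \<tau> \<and> f \<tau> \<le> B" and B0: "0 \<le> B"
  shows "\<bar>exp (- a * u) * f (t - u) * indicator {0..t} u\<bar> \<le> B * (exp (- a * u) * indicator {0..} u)"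
proof (cases "0 \<le> u \<and> u \<le> t")
  case True
  then have "0 \<le> f (t - u)" "f (t - u) \<le> B" using fb[of "t - u"] by auto
  then show ?thesis using True by (simp add: abs_mult mult.commute mult_left_mono)
next
  case False
  then show ?thesis using B0 by (auto split: split_indicator)
qed

lemma step:
  assumes sm: "s < \<mu> k" and B0: "0 \<le> B"
    and B: "\<And>\<tau>. 0 \<le> \<tau> \<Longrightarrow> Fk k False k \<tau> \<le> ennreal B"
    and lim: "((\<lambda>t. enn2real (Fk k False k t)) \<longlongrightarrow> L) at_top"
  shows "\<forall>t. 0 \<le> t \<longrightarrow> Fk (Suc k) incl (Suc k) t \<le> ennreal (exp (s * x0 (Suc k)) + \<mu> k * B / (\<mu> k - s))"
    and "((\<lambda>t. enn2real (Fk (Suc k) incl (Suc k) t)) \<longlongrightarrow> L * (\<mu> k / (\<mu> k - s))) at_top"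
proof -
  define f where "f \<tau> = enn2real (Fk k False k \<tau>)" for \<tau>
  define a where "a = \<mu> k - s"
  define m where "m = \<mu> k"
  have a: "0 < a" using sm by (simp add: a_def)
  have m: "0 < m" using mu_pos by (simp add: m_def)
  have fm[measurable]: "f \<in> borel_measurable borel" unfolding f_def using Fk_meas[of k False] by measurable
  have Ff: "Fk k False k \<tau> = ennreal (f \<tau>)" if "0 \<le> \<tau>" for \<tau>
  proof -
    have lt: "Fk k False k \<tau> < top" using B[OF that] ennreal_less_top le_less_trans by blast
    then show ?thesis unfolding f_def by simp
  qed
  have fb: "0 \<le> f \<tau> \<and> f \<tau> \<le> B" if "0 \<le> \<tau>" for \<tau>
  proof
    show "0 \<le> f \<tau>" by (simp add: f_def)
    have "ennreal (f \<tau>) \<le> ennreal B" using B[OF that] Ff[OF that] by simp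
    then show "f \<tau> \<le> B" using B0 by (simp add: ennreal_le_iff)
  qed
  define J where "J t = (\<integral>u. exp (- a * u) * f (t - u) * indicator {0..t} u \<partial>lborel)" for t
  have Jlim: "(J \<longlongrightarrow> L / a) at_top"
    unfolding J_def using conv_limit[OF fm fb _ a, of L] lim by (simp add: f_def)
  have intw: "integrable lborel (\<lambda>u. B * (exp (- a * u) * indicator {0..} u))"
    using exp_integrable[OF a] by (rule integrable_mult_right)
  have intJ: "integrable lborel (\<lambda>u. exp (- a * u) * f (t - u) * indicator {0..t} u)" for t
  proof (rule Bochner_Integration.integrable_bound[OF intw])
    show "(\<lambda>u. exp (- a * u) * f (t - u) * indicator {0..t} u) \<in> borel_measurable lborel" by measurable
    show "AE u in lborel. norm (exp (- a * u) * f (t - u) * indicator {0..t} u) \<le> norm (B * (exp (- a * u) * indicator {0..} u))"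
      using bound_pt[OF fb B0] B0 by (intro AE_I2) (simp add: abs_mult)
  qed
  have nnJ: "0 \<le> exp (- a * u) * f (t - u) * indicator {0..t} u" for t u
    using fb[of "t - u"] by (auto split: split_indicator)
  have Jnn: "0 \<le> J t" for t
    unfolding J_def by (intro integral_nonneg_AE AE_I2 nnJ)
  have Jb: "J t \<le> B / a" for t
  proof -
    have "J t \<le> (\<integral>u. B * (exp (- a * u) * indicator {0..} u) \<partial>lborel)"
      unfolding J_def
      by (rule integral_mono[OF intJ intw]) (rule order_trans[OF abs_ge_self bound_pt[OF fb B0]])
    also have "\<dots> = B / a" using exp_integral[OF a] by simp
    finally show ?thesis .
  qed
  have Int: "(\<integral>\<^sup>+\<tau>. ennreal (\<mu> k * exp (- \<mu> k * (t - \<tau>))) * (Fk k False k \<tau> * ennreal (exp (s * (t - \<tau>)))) * indicator {0..t} \<tau> \<partial>lborel)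
      = ennreal (m * J t)" if t: "0 \<le> t" for t
  proof -
    have "(\<integral>\<^sup>+\<tau>. ennreal (\<mu> k * exp (- \<mu> k * (t - \<tau>))) * (Fk k False k \<tau> * ennreal (exp (s * (t - \<tau>)))) * indicator {0..t} \<tau> \<partial>lborel)
      = (\<integral>\<^sup>+u. ennreal (\<mu> k * exp (- \<mu> k * (t - (t - u)))) * (Fk k False k (t - u) * ennreal (exp (s * (t - (t - u))))) * indicator {0..t} (t - u) \<partial>lborel)"
      by (rule affine_int) (use Fk_meas[of k False] in measurable)
    also have "\<dots> = (\<integral>\<^sup>+u. ennreal (m * (exp (- a * u) * f (t - u) * indicator {0..t} u)) \<partial>lborel)"
    proof (rule nn_integral_cong)
      fix u :: real
      show "ennreal (\<mu> k * exp (- \<mu> k * (t - (t - u)))) * (Fk k False k (t - u) * ennreal (exp (s * (t - (t - u))))) * indicator {0..t} (t - u)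
          = ennreal (m * (exp (- a * u) * f (t - u) * indicator {0..t} u))"
      proof (cases "0 \<le> u \<and> u \<le> t")
        case True
        then have "Fk k False k (t - u) = ennreal (f (t - u))" by (intro Ff) simp
        moreover have "exp (- \<mu> k * u) * exp (s * u) = exp (- a * u)"
          by (simp add: a_def exp_add[symmetric] algebra_simps)
        moreover have "0 \<le> f (t - u)" using fb[of "t - u"] True by simp
        ultimately show ?thesis using True m
          by (simp add: ennreal_mult[symmetric] m_def mult_ac)
      next
        case False
        then show ?thesis by (auto split: split_indicator)
      qed
    qed
    also have "\<dots> = ennreal (\<integral>u. m * (exp (- a * u) * f (t - u) * indicator {0..t} u) \<partial>lborel)"
      by (rule nn_integral_eq_integral[OF integrable_mult_right[OF intJ]])
         (use nnJ m in \<open>auto intro!: AE_I2 mult_nonneg_nonneg\<close>)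
    also have "\<dots> = ennreal (m * J t)"
      unfolding J_def by simp
    finally show ?thesis .
  qed
  have Fs: "Fk (Suc k) incl (Suc k) t = ennreal (exp (s * x0 (Suc k) - a * t) + m * J t)" if t: "0 \<le> t" for t
  proof -
    have ee: "exp (s * (x0 (Suc k) + t)) * exp (- \<mu> k * t) = exp (s * x0 (Suc k) - a * t)"
      by (simp add: a_def exp_add[symmetric] algebra_simps)
    have "Fk (Suc k) incl (Suc k) t = ennreal (exp (s * (x0 (Suc k) + t))) * ennreal (exp (- \<mu> k * t)) + ennreal (m * J t)"
      using Fk_rec[OF t, of k incl] Int[OF t] by simp
    also have "ennreal (exp (s * (x0 (Suc k) + t))) * ennreal (exp (- \<mu> k * t)) = ennreal (exp (s * x0 (Suc k) - a * t))"
      by (subst ennreal_mult[symmetric]) (simp_all only: ee exp_ge_zero)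
    also have "ennreal (exp (s * x0 (Suc k) - a * t)) + ennreal (m * J t) = ennreal (exp (s * x0 (Suc k) - a * t) + m * J t)"
      by (rule ennreal_plus[symmetric]) (use Jnn[of t] m in simp_all)
    finally show ?thesis .
  qed
  show "\<forall>t. 0 \<le> t \<longrightarrow> Fk (Suc k) incl (Suc k) t \<le> ennreal (exp (s * x0 (Suc k)) + \<mu> k * B / (\<mu> k - s))"
  proof (intro allI impI)
    fix t :: real assume t: "0 \<le> t"
    have e1: "exp (s * x0 (Suc k) - a * t) \<le> exp (s * x0 (Suc k))"
      using a t by simp
    have e2: "m * J t \<le> m * (B / a)"
      using Jb[of t] m by (intro mult_left_mono) auto
    have e3: "m * (B / a) = \<mu> k * B / (\<mu> k - s)"
      by (simp add: m_def a_def)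
    have "exp (s * x0 (Suc k) - a * t) + m * J t \<le> exp (s * x0 (Suc k)) + \<mu> k * B / (\<mu> k - s)"
      using e1 e2 e3 by linarith
    then show "Fk (Suc k) incl (Suc k) t \<le> ennreal (exp (s * x0 (Suc k)) + \<mu> k * B / (\<mu> k - s))"
      unfolding Fs[OF t] by (rule ennreal_leI)
  qed
  have e0: "((\<lambda>t. exp (s * x0 (Suc k) - a * t)) \<longlongrightarrow> 0) at_top"
  proof -
    have "filterlim (\<lambda>t. a * t) at_top at_top"
      by (rule filterlim_tendsto_pos_mult_at_top[OF tendsto_const a filterlim_ident])
    then have "filterlim (\<lambda>t. - (a * t)) at_bot at_top"
      by (simp add: filterlim_uminus_at_top)
    then have "((\<lambda>t. exp (- (a * t))) \<longlongrightarrow> 0) at_top"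
      by (rule filterlim_compose[OF exp_at_bot])
    then have "((\<lambda>t. exp (s * x0 (Suc k)) * exp (- (a * t))) \<longlongrightarrow> exp (s * x0 (Suc k)) * 0) at_top"
      by (intro tendsto_mult tendsto_const)
    moreover have "(\<lambda>t. exp (s * x0 (Suc k) - a * t)) = (\<lambda>t. exp (s * x0 (Suc k)) * exp (- (a * t)))"
      by (rule ext) (simp add: exp_diff exp_minus divide_inverse)
    ultimately show ?thesis by simp
  qed
  have "((\<lambda>t. exp (s * x0 (Suc k) - a * t) + m * J t) \<longlongrightarrow> 0 + m * (L / a)) at_top"
    by (intro tendsto_add e0 tendsto_mult tendsto_const Jlim)
  moreover have "0 + m * (L / a) = L * (\<mu> k / (\<mu> k - s))"
    by (simp add: m_def a_def)
  ultimately have l2: "((\<lambda>t. exp (s * x0 (Suc k) - a * t) + m * J t) \<longlongrightarrow> L * (\<mu> k / (\<mu> k - s))) at_top"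
    by simp
  show "((\<lambda>t. enn2real (Fk (Suc k) incl (Suc k) t)) \<longlongrightarrow> L * (\<mu> k / (\<mu> k - s))) at_top"
  proof (rule Lim_transform_eventually[OF l2])
    show "\<forall>\<^sub>F t in at_top. exp (s * x0 (Suc k) - a * t) + m * J t = enn2real (Fk (Suc k) incl (Suc k) t)"
      using eventually_ge_at_top[of 0]
    proof eventually_elim
      case (elim t)
      have "0 \<le> exp (s * x0 (Suc k) - a * t) + m * J t" using Jnn[of t] m by simp
      then show ?case using Fs[OF elim] by simp
    qed
  qed
qed

lemma main_ind:
  assumes sm: "\<And>l. l < K \<Longrightarrow> s < \<mu> l"
  shows "k \<le> K \<Longrightarrow> (\<exists>B\<ge>0. \<forall>incl \<tau>. 0 \<le> \<tau> \<longrightarrow> Fk k incl k \<tau> \<le> ennreal B) \<and>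
     (\<forall>incl. ((\<lambda>t. enn2real (Fk k incl k t)) \<longlongrightarrow> (\<Prod>i<k. \<mu> i / (\<mu> i - s))) at_top)"
proof (induction k)
  case 0
  show ?case by (auto simp: Fk_0 intro!: exI[of _ 1])
next
  case (Suc k)
  then have kK: "k < K" by simp
  from Suc.IH kK obtain B where B0: "0 \<le> B" and B: "\<And>incl \<tau>. 0 \<le> \<tau> \<Longrightarrow> Fk k incl k \<tau> \<le> ennreal B"
    and lim: "\<And>incl. ((\<lambda>t. enn2real (Fk k incl k t)) \<longlongrightarrow> (\<Prod>i<k. \<mu> i / (\<mu> i - s))) at_top"
    by auto
  have smk: "s < \<mu> k" using sm kK by simp
  note st = step[OF smk B0 B lim]
  have B'0: "0 \<le> exp (s * x0 (Suc k)) + \<mu> k * B / (\<mu> k - s)"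
    using smk B0 mu_pos[of k] by (intro add_nonneg_nonneg divide_nonneg_nonneg mult_nonneg_nonneg) auto
  show ?case
  proof
    show "\<exists>B\<ge>0. \<forall>incl \<tau>. 0 \<le> \<tau> \<longrightarrow> Fk (Suc k) incl (Suc k) \<tau> \<le> ennreal B"
      using st(1) B'0 by blast
    show "\<forall>incl. ((\<lambda>t. enn2real (Fk (Suc k) incl (Suc k) t)) \<longlongrightarrow> (\<Prod>i<Suc k. \<mu> i / (\<mu> i - s))) at_top"
      using st(2) by simp
  qed
qed

end

theorem theorem5:
  fixes n :: nat and \<mu> :: "nat \<Rightarrow> real" and x0 :: "nat \<Rightarrow> real"
  assumes "\<forall>i<n. 0 < \<mu> i"
    and "\<forall>k\<in>{1..n}. 0 \<le> x0 k"
  shows "\<exists>s0>0. \<forall>s<s0. \<forall>k\<in>{1..n}.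
           ((\<lambda>t. \<integral>\<omega>. exp (s * line_age \<omega> x0 True k t) \<partial>line_M n \<mu>)
              \<longlongrightarrow> (\<Prod>i<k. \<mu> i / (\<mu> i - s))) at_top"
proof -
  define \<mu>' where "\<mu>' l = (if l < n then \<mu> l else 1)" for l
  have mu'pos: "0 < \<mu>' l" for l using assms(1) by (simp add: \<mu>'_def)
  define s0 where "s0 = (if n = 0 then 1 else Min (\<mu> ` {..<n}))"
  have s0pos: "0 < s0"
  proof (cases "n = 0")
    case False
    then have "0 < Min (\<mu> ` {..<n})" using assms(1) by (subst Min_gr_iff) auto
    then show ?thesis using False by (simp add: s0_def)
  qed (simp add: s0_def)
  have s0le: "s0 \<le> \<mu> i" if "i < n" for i
    using that by (auto simp: s0_def)
  show ?thesis
  proof (rule exI[of _ s0], intro conjI allI impI ballI)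
    show "0 < s0" by (rule s0pos)
  next
    fix s :: real and k :: nat
    assume s: "s < s0" and k: "k \<in> {1..n}"
    interpret L: line \<mu>' x0 s using mu'pos by unfold_locales
    have sm: "s < \<mu>' l" if "l < n" for l using s s0le[OF that] that by (simp add: \<mu>'_def)
    have kn: "k \<le> n" using k by simp
    have M: "line_M n \<mu> = PiM {..<n} L.Ms"
      unfolding line_M_def by (rule PiM_cong) (auto simp: \<mu>'_def)
    have eq: "(\<integral>\<omega>. exp (s * line_age \<omega> x0 True k t) \<partial>line_M n \<mu>) = enn2real (L.Fk k True k t)" for t
    proof -
      have "(\<lambda>x::real. exp (s * x)) \<in> borel_measurable borel" by measurable
      from measurable_compose[OF L.meas_age_fix[OF kn, of True t] this]
      have m1: "(\<lambda>\<omega>. exp (s * line_age \<omega> x0 True k t)) \<in> borel_measurable (PiM {..<n} L.Ms)" .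
      have "(\<integral>\<omega>. exp (s * line_age \<omega> x0 True k t) \<partial>line_M n \<mu>) = enn2real (L.Fk n True k t)"
        unfolding M L.Fk_def
        by (rule integral_eq_nn_integral[OF m1]) simp
      also have "\<dots> = enn2real (L.Fk k True k t)" using L.Fk_eq[OF kn] by simp
      finally show ?thesis .
    qed
    have prodeq: "(\<Prod>i<k. \<mu> i / (\<mu> i - s)) = (\<Prod>i<k. \<mu>' i / (\<mu>' i - s))"
      using kn by (intro prod.cong) (auto simp: \<mu>'_def)
    show "((\<lambda>t. \<integral>\<omega>. exp (s * line_age \<omega> x0 True k t) \<partial>line_M n \<mu>) \<longlongrightarrow> (\<Prod>i<k. \<mu> i / (\<mu> i - s))) at_top"
      unfolding eq prodeq using L.main_ind[OF sm kn] by blast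
  qed
qed



end
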